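(* Let $W$ be a continuous real random variable with $\mathbb{E}[W]=0$, $\mathrm{Var}[W]=1$, cdf $F_W$ with a density $f_W$ defined (positive) on all of $\mathbb{R}$, inverse cdf $F_W^{-1}$ with $F_W^{-1}(0)=-\infty$, $F_W^{-1}(1)=+\infty$. Let $\mu_1,\mu_2\in\mathbb{R}$, $\sigma_1,\sigma_2>0$, not both $\mu_1=\mu_2$ and $\sigma_1=\sigma_2$, and define $h:(0,1)\to\mathbb{R}$ by $$h(u)=e^{\mu_1+\sigma_1F_W^{-1}(u)}-e^{\mu_2+\sigma_2F_W^{-1}(u)},$$ with $y^{\min}=\inf_{u\in(0,1)}h(u)$ and $y^{\max}=\sup_{u\in(0,1)}h(u)$. For $\sigma_1\ne\sigma_2$ let $$c^{\star}=F_W\!\left(\frac{\mu_2-\mu_1}{\sigma_1-\sigma_2}\right),\qquad u^{\star}=F_W\!\left(\frac{\log(\sigma_1/\sigma_2)+\mu_1-\mu_2}{\sigma_2-\sigma_1}\right),\qquad y^{\star}=h(u^{\star}).$$ Then: 1. If $\sigma_1=\sigma_2$ and $\mu_1>\mu_2$: $y^{\min}=0$, $y^{\max}=+\infty$, and $h$ is non-decreasing. 2. If $\sigma_1=\sigma_2$ and $\mu_2>\mu_1$: $y^{\min}=-\infty$, $y^{\max}=0$, and $h$ is non-increasing. 3. If $\sigma_1>\sigma_2$: $y^{\min}=y^{\star}<0$, $y^{\max}=+\infty$, and $h$ has a non-decreasing upper tail with threshold $c^{\star}$. 4. If $\sigma_1<\sigma_2$: $y^{\min}=-\infty$, $y^{\max}=y^{\star}>0$,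 and $h$ has a non-increasing upper tail with threshold $c^{\star}$.
   Context: For $f:(0,1)\to\mathbb{R}$: $f$ has a non-decreasing upper tail if there exists $x'\in(0,1)$ with $f(x)\le f(x')$ for all $x<x'$ and $f(x_1)\le f(x_2)$ for all $x'\le x_1\le x_2$; its threshold is the infimum of the set of all such $x'$. $f$ has a non-increasing upper tail if there exists $x'\in(0,1)$ with $f(x)\ge f(x')$ for all $x<x'$ and $f(x_1)\ge f(x_2)$ for all $x'\le x_1\le x_2$; its threshold is the infimum of the set of all such $x'$. (In the paper's setting, $h(U)$ with $U$ uniform on $[0,1]$ is the distribution of $R_1-R_2$ for comonotonic $R_i$ with $\log R_i=\mu_i+\sigma_iW$.) *)

theory Defs
  imports "HOL-Probability.Probability"
begin

text \<open>Generalized inverse (quantile function) of a cdf F; on (0,1) it is the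
  ordinary inverse when F is a continuous strictly increasing bijection onto (0,1).\<close>
definition quantile :: "(real \<Rightarrow> real) \<Rightarrow> real \<Rightarrow> real" where
  "quantile F u = Inf {x. u \<le> F x}"

definition nondec_tail_at :: "(real \<Rightarrow> real) \<Rightarrow> real \<Rightarrow> bool" where
  "nondec_tail_at f x' \<longleftrightarrow> x' \<in> {0<..<1} \<and>
     (\<forall>x\<in>{0<..<1}. x < x' \<longrightarrow> f x \<le> f x') \<and>
     (\<forall>x1\<in>{0<..<1}. \<forall>x2\<in>{0<..<1}. x' \<le> x1 \<and> x1 \<le> x2 \<longrightarrow> f x1 \<le> f x2)"

definition has_nondec_upper_tail :: "(real \<Rightarrow> real) \<Rightarrow> bool" where
  "has_nondec_upper_tail f \<longleftrightarrow> (\<exists>x'. nondec_tail_at f x')"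

definition nondec_tail_threshold :: "(real \<Rightarrow> real) \<Rightarrow> real" where
  "nondec_tail_threshold f = Inf {x'. nondec_tail_at f x'}"

definition noninc_tail_at :: "(real \<Rightarrow> real) \<Rightarrow> real \<Rightarrow> bool" where
  "noninc_tail_at f x' \<longleftrightarrow> x' \<in> {0<..<1} \<and>
     (\<forall>x\<in>{0<..<1}. x < x' \<longrightarrow> f x \<ge> f x') \<and>
     (\<forall>x1\<in>{0<..<1}. \<forall>x2\<in>{0<..<1}. x' \<le> x1 \<and> x1 \<le> x2 \<longrightarrow> f x1 \<ge> f x2)"

definition has_noninc_upper_tail :: "(real \<Rightarrow> real) \<Rightarrow> bool" where
  "has_noninc_upper_tail f \<longleftrightarrow> (\<exists>x'. noninc_tail_at f x')"

definition noninc_tail_threshold :: "(real \<Rightarrow> real) \<Rightarrow> real" where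
  "noninc_tail_threshold f = Inf {x'. noninc_tail_at f x'}"

end

theory Submission
  imports Defs "HOL-Real_Asymp.Real_Asymp"
begin


lemma F_props:
  fixes M :: "'a measure" and W :: "'a \<Rightarrow> real" and f :: "real \<Rightarrow> real"
  assumes P: "prob_space M"
    and dens: "distributed M lborel W (\<lambda>x. ennreal (f x))"
    and fpos: "\<And>x. f x > 0"
  defines "F \<equiv> cdf (distr M borel W)"
  shows "\<And>x y. x < y \<Longrightarrow> F x < F y" "\<And>x. isCont F x" "(F \<longlongrightarrow> 0) at_bot" "(F \<longlongrightarrow> 1) at_top"
proof -
  let ?N = "distr M borel W"
  have fm: "(\<lambda>x. ennreal (f x)) \<in> borel_measurable lborel" and Wm: "W \<in> measurable M lborel"
    using dens unfolding distributed_def by auto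
  have Wm': "W \<in> measurable M borel" using Wm by simp
  have RD: "real_distribution ?N" using prob_space.real_distribution_distr[OF P] Wm' by simp
  interpret real_distribution ?N by (rule RD)
  have NE: "?N = density lborel (\<lambda>x. ennreal (f x))"
  proof -
    have "?N = distr M lborel W" by (rule distr_cong) auto
    then show ?thesis using dens unfolding distributed_def by simp
  qed
  show "(F \<longlongrightarrow> 0) at_bot" unfolding F_def by (rule cdf_lim_at_bot)
  show "(F \<longlongrightarrow> 1) at_top" unfolding F_def by (rule cdf_lim_at_top_prob)
  show "isCont F x" for x
  proof -
    have "{x} \<in> null_sets lborel" by (rule countable_imp_null_set_lborel) simp
    then have "AE t in lborel. t \<notin> {x}" using AE_not_in by blast
    then have "AE t in lborel. t \<in> {x} \<longrightarrow> ennreal (f t) = 0" by eventually_elim auto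
    then have "{x} \<in> null_sets ?N" unfolding NE using null_sets_density_iff[OF fm] by simp
    then have "measure ?N {x} = 0" by (simp add: measure_eq_0_null_sets)
    then show ?thesis unfolding F_def by (simp add: isCont_cdf)
  qed
  show "F x < F y" if xy: "x < y" for x y
  proof -
    have "{x<..y} \<notin> null_sets ?N"
    proof
      assume "{x<..y} \<in> null_sets ?N"
      then have "AE t in lborel. t \<in> {x<..y} \<longrightarrow> ennreal (f t) = 0" unfolding NE using null_sets_density_iff[OF fm] by simp
      then have "AE t in lborel. t \<notin> {x<..y}" 
        by (rule eventually_mono) (metis fpos ennreal_eq_0_iff not_le)
      then have "{x<..y} \<in> null_sets lborel"
        by (simp add: AE_iff_null_sets)
      then have "emeasure lborel {x<..y} = 0" by auto
      then show False using xy by simp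
    qed
    then have "emeasure ?N {x<..y} \<noteq> 0" by (auto simp: null_sets_def)
    then have "measure ?N {x<..y} > 0"
      by (simp add: emeasure_eq_measure zero_less_measure_iff)
    then show ?thesis unfolding F_def using cdf_diff_eq[OF xy] by simp
  qed
qed



lemma g_neg_iff:
  fixes s1 s2 a1 a2 y :: real
  assumes "s1 > s2"
  shows "exp(a1+s1*y) - exp(a2+s2*y) < 0 \<longleftrightarrow> y < (a2-a1)/(s1-s2)"
proof -
  have "exp(a1+s1*y) - exp(a2+s2*y) < 0 \<longleftrightarrow> a1+s1*y < a2+s2*y" by simp
  also have "\<dots> \<longleftrightarrow> y * (s1-s2) < a2 - a1" by (simp add: algebra_simps)
  also have "\<dots> \<longleftrightarrow> y < (a2-a1)/(s1-s2)" using assms by (simp add: pos_less_divide_eq)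
  finally show ?thesis .
qed

lemma g_deriv_sign:
  fixes s1 s2 a1 a2 t :: real
  assumes "s2 > 0" "s1 > s2"
  shows "s1 * exp(a1+s1*t) - s2 * exp(a2+s2*t) \<ge> 0 \<longleftrightarrow> t \<ge> (ln (s1/s2)+a1-a2)/(s2-s1)"
proof -
  have s1: "s1 > 0" using assms by simp
  have "s1 * exp(a1+s1*t) = exp (ln s1 + a1 + s1*t)" using s1 by (simp add: exp_add)
  moreover have "s2 * exp(a2+s2*t) = exp (ln s2 + a2 + s2*t)" using assms by (simp add: exp_add)
  ultimately have "s1 * exp(a1+s1*t) - s2 * exp(a2+s2*t) \<ge> 0 \<longleftrightarrow> ln s2 + a2 + s2*t \<le> ln s1 + a1 + s1*t"
    by simp
  also have "\<dots> \<longleftrightarrow> -(ln (s1/s2)+a1-a2) \<le> t * (s1 - s2)"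
    using s1 assms by (simp add: ln_div algebra_simps)
  also have "\<dots> \<longleftrightarrow> -(ln (s1/s2)+a1-a2) / (s1 - s2) \<le> t"
    using assms by (simp add: pos_divide_le_eq)
  also have "-(ln (s1/s2)+a1-a2) / (s1 - s2) = (ln (s1/s2)+a1-a2)/(s2-s1)"
    by (simp add: divide_simps) (simp add: algebra_simps)
  finally show ?thesis .
qed

lemma g_deriv_sign2:
  fixes s1 s2 a1 a2 t :: real
  assumes "s2 > 0" "s1 > s2"
  shows "s1 * exp(a1+s1*t) - s2 * exp(a2+s2*t) \<le> 0 \<longleftrightarrow> t \<le> (ln (s1/s2)+a1-a2)/(s2-s1)"
proof -
  have s1: "s1 > 0" using assms by simp
  have "s1 * exp(a1+s1*t) = exp (ln s1 + a1 + s1*t)" using s1 by (simp add: exp_add)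
  moreover have "s2 * exp(a2+s2*t) = exp (ln s2 + a2 + s2*t)" using assms by (simp add: exp_add)
  ultimately have "s1 * exp(a1+s1*t) - s2 * exp(a2+s2*t) \<le> 0 \<longleftrightarrow> ln s2 + a2 + s2*t \<ge> ln s1 + a1 + s1*t"
    by simp
  also have "\<dots> \<longleftrightarrow> -(ln (s1/s2)+a1-a2) \<ge> t * (s1 - s2)"
    using s1 assms by (simp add: ln_div algebra_simps)
  also have "\<dots> \<longleftrightarrow> -(ln (s1/s2)+a1-a2) / (s1 - s2) \<ge> t"
    using assms by (simp add: pos_le_divide_eq)
  also have "-(ln (s1/s2)+a1-a2) / (s1 - s2) = (ln (s1/s2)+a1-a2)/(s2-s1)"
    by (simp add: divide_simps) (simp add: algebra_simps)
  finally show ?thesis .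
qed

lemma g_mono:
  fixes s1 s2 a1 a2 :: real
  assumes "s2 > 0" "s1 > s2"
  defines "g \<equiv> \<lambda>y. exp(a1+s1*y) - exp(a2+s2*y)"
  defines "xs \<equiv> (ln (s1/s2)+a1-a2)/(s2-s1)"
  shows "\<And>y z. xs \<le> y \<Longrightarrow> y \<le> z \<Longrightarrow> g y \<le> g z"
    and "\<And>y z. y \<le> z \<Longrightarrow> z \<le> xs \<Longrightarrow> g z \<le> g y"
proof -
  have D: "\<And>t. (g has_real_derivative (s1 * exp(a1+s1*t) - s2 * exp(a2+s2*t))) (at t)"
    unfolding g_def by (auto intro!: derivative_eq_intros)
  show "g y \<le> g z" if "xs \<le> y" "y \<le> z" for y z
    using that by (intro DERIV_nonneg_imp_nondecreasing[OF \<open>y \<le> z\<close>])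
      (use D g_deriv_sign[OF assms(1,2)] in \<open>fastforce simp: xs_def\<close>)
  show "g z \<le> g y" if "y \<le> z" "z \<le> xs" for y z
    using that by (intro DERIV_nonpos_imp_nonincreasing[OF \<open>y \<le> z\<close>])
      (use D g_deriv_sign2[OF assms(1,2)] in \<open>fastforce simp: xs_def\<close>)
qed

lemma g_min_neg:
  fixes s1 s2 a1 a2 :: real
  assumes "s2 > 0" "s1 > s2"
  shows "exp(a1+s1*((ln (s1/s2)+a1-a2)/(s2-s1))) - exp(a2+s2*((ln (s1/s2)+a1-a2)/(s2-s1))) < 0"
proof -
  define xs where "xs = (ln (s1/s2)+a1-a2)/(s2-s1)"
  have "xs * (s2 - s1) = ln (s1/s2)+a1-a2" unfolding xs_def using assms by simp
  then have "a1 + s1*xs = a2 + s2*xs - ln (s1/s2)" by (simp add: algebra_simps)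
  then have "exp (a1 + s1*xs) = exp (a2 + s2*xs) / (s1/s2)"
    using assms by (simp add: exp_diff)
  also have "\<dots> < exp (a2 + s2*xs)" using assms by (simp add: divide_simps)
  finally show ?thesis unfolding xs_def by simp
qed

lemma g_lim:
  fixes s1 s2 a1 a2 :: real
  assumes "s2 > 0" "s1 > s2"
  shows "filterlim (\<lambda>y::real. exp(a1+s1*y) - exp(a2+s2*y)) at_top at_top"
    and "((\<lambda>y::real. exp(a1+s1*y) - exp(a2+s2*y)) \<longlongrightarrow> 0) at_bot"
  using assms by real_asymp+



lemma F_quant:
  fixes F :: "real \<Rightarrow> real"
  assumes Fmono: "\<And>x y. x < y \<Longrightarrow> F x < F y" and cont: "\<And>x. isCont F x"
    and lim0: "(F \<longlongrightarrow> 0) at_bot" and lim1: "(F \<longlongrightarrow> 1) at_top"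
  shows "\<And>y. quantile F (F y) = y" "\<And>u. u \<in> {0<..<1} \<Longrightarrow> \<exists>y. F y = u"
    "\<And>y. F y \<in> {0<..<1}"
proof -
  have le_iff: "F x \<le> F y \<longleftrightarrow> x \<le> y" for x y
    using Fmono[of x y] Fmono[of y x] by (cases x y rule: linorder_cases) auto
  show "quantile F (F y) = y" for y
  proof -
    have "{x. F y \<le> F x} = {y..}" using le_iff by auto
    then show ?thesis unfolding quantile_def by simp
  qed
  show "F y \<in> {0<..<1}" for y
  proof -
    have "F y < 1"
    proof (rule ccontr)
      assume "\<not> F y < 1"
      then have "1 < F (y+1)" using Fmono[of y "y+1"] by simp
      from order_tendstoD(2)[OF lim1 this] obtain N where N: "\<And>x. x \<ge> N \<Longrightarrow> F x < F (y+1)"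
        by (auto simp: eventually_at_top_linorder)
      have "F (y+1) \<le> F (max N (y+1))" using le_iff by simp
      with N[of "max N (y+1)"] show False by simp
    qed
    moreover have "0 < F y"
    proof (rule ccontr)
      assume "\<not> 0 < F y"
      then have "F (y-1) < 0" using Fmono[of "y-1" y] by simp
      from order_tendstoD(1)[OF lim0 this] obtain N where N: "\<And>x. x \<le> N \<Longrightarrow> F (y-1) < F x"
        by (auto simp: eventually_at_bot_linorder)
      have "F (min N (y-1)) \<le> F (y-1)" using le_iff by simp
      with N[of "min N (y-1)"] show False by simp
    qed
    ultimately show ?thesis by simp
  qed
  show "\<exists>y. F y = u" if u: "u \<in> {0<..<1}" for u
  proof -
    from u have "0 < u" "u < 1" by auto
    from order_tendstoD(2)[OF lim0 \<open>0 < u\<close>] obtain a where a: "\<And>x. x \<le> a \<Longrightarrow> F x < u"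
      by (auto simp: eventually_at_bot_linorder)
    from order_tendstoD(1)[OF lim1 \<open>u < 1\<close>] obtain b where b: "\<And>x. x \<ge> b \<Longrightarrow> u < F x"
      by (auto simp: eventually_at_top_linorder)
    have "F a \<le> u" using a[of a] by simp
    moreover have "u \<le> F (max a b)" using b[of "max a b"] by simp
    ultimately obtain x where "F x = u"
      using IVT[of F a u "max a b"] cont by auto
    then show ?thesis by blast
  qed
qed



lemma core3:
  fixes F h :: "real \<Rightarrow> real" and a1 a2 s1 s2 :: real
  assumes Fmono: "\<And>x y. x < y \<Longrightarrow> F x < F y"
    and Fsurj: "\<And>u. u \<in> {0<..<1} \<Longrightarrow> \<exists>y. F y = u"
    and Frange: "\<And>y. F y \<in> {0<..<1}"
    and hF: "\<And>y. h (F y) = exp(a1+s1*y) - exp(a2+s2*y)"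
    and s: "s2 > 0" "s1 > s2"
  shows "F ((ln (s1/s2)+a1-a2)/(s2-s1)) \<in> {0<..<1}"
    "\<forall>u\<in>{0<..<1}. h (F ((ln (s1/s2)+a1-a2)/(s2-s1))) \<le> h u"
    "h (F ((ln (s1/s2)+a1-a2)/(s2-s1))) < 0"
    "\<forall>B. \<exists>u\<in>{0<..<1}. B < h u"
    "{x'. nondec_tail_at h x'} = {F ((a2-a1)/(s1-s2))..<1}"
    "F ((a2-a1)/(s1-s2)) \<in> {0<..<1}"
proof -
  define g where "g = (\<lambda>y. exp(a1+s1*y) - exp(a2+s2*y))"
  define xs where "xs = (ln (s1/s2)+a1-a2)/(s2-s1)"
  define x0 where "x0 = (a2-a1)/(s1-s2)"
  have hg: "h (F y) = g y" for y using hF g_def by simp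
  have le_iff: "F x \<le> F y \<longleftrightarrow> x \<le> y" for x y
    using Fmono[of x y] Fmono[of y x] by (cases x y rule: linorder_cases) auto
  have neg: "g y < 0 \<longleftrightarrow> y < x0" for y unfolding g_def x0_def using g_neg_iff[OF s(2)] by simp
  have up: "\<And>y z. xs \<le> y \<Longrightarrow> y \<le> z \<Longrightarrow> g y \<le> g z"
    and down: "\<And>y z. y \<le> z \<Longrightarrow> z \<le> xs \<Longrightarrow> g z \<le> g y"
    using g_mono[OF s] unfolding g_def xs_def by blast+
  have gxs: "g xs < 0" using g_min_neg[OF s] unfolding g_def xs_def by simp
  have xsx0: "xs < x0" using gxs neg by simp
  have gmin: "g xs \<le> g y" for y
    by (cases "xs \<le> y") (auto intro: up down)
  have lt: "filterlim g at_top at_top" and l0: "(g \<longlongrightarrow> 0) at_bot"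
    using g_lim[OF s] unfolding g_def by auto
  show "F ((ln (s1/s2)+a1-a2)/(s2-s1)) \<in> {0<..<1}" by (rule Frange)
  show "F ((a2-a1)/(s1-s2)) \<in> {0<..<1}" by (rule Frange)
  show "h (F ((ln (s1/s2)+a1-a2)/(s2-s1))) < 0" using gxs hg xs_def by simp
  show "\<forall>u\<in>{0<..<1}. h (F ((ln (s1/s2)+a1-a2)/(s2-s1))) \<le> h u"
  proof
    fix u :: real assume "u \<in> {0<..<1}"
    then obtain y where "F y = u" using Fsurj by blast
    then show "h (F ((ln (s1/s2)+a1-a2)/(s2-s1))) \<le> h u"
      using gmin[of y] hg xs_def by auto
  qed
  show "\<forall>B. \<exists>u\<in>{0<..<1}. B < h u"
  proof
    fix B :: real
    have "eventually (\<lambda>y. g y > B) at_top" using lt by (simp add: filterlim_at_top_dense)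
    then obtain y where "g y > B" by (auto simp: eventually_at_top_linorder)
    then show "\<exists>u\<in>{0<..<1}. B < h u" using Frange[of y] hg[of y] by metis
  qed
  show "{x'. nondec_tail_at h x'} = {F ((a2-a1)/(s1-s2))..<1}"
  proof (intro set_eqI iffI)
    fix x' assume "x' \<in> {x'. nondec_tail_at h x'}"
    then have T: "nondec_tail_at h x'" by simp
    then have x'01: "x' \<in> {0<..<1}" unfolding nondec_tail_at_def by simp
    then obtain y' where y': "F y' = x'" using Fsurj by blast
    have "x0 \<le> y'"
    proof (rule ccontr)
      assume "\<not> x0 \<le> y'"
      then have "g y' < 0" using neg by simp
      from order_tendstoD(1)[OF l0 this] have "eventually (\<lambda>y. g y' < g y) at_bot" .
      moreover have "eventually (\<lambda>y. y < y') at_bot" unfolding eventually_at_bot_linorder by (rule exI[of _ "y' - 1"]) auto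
      ultimately have "eventually (\<lambda>y. g y' < g y \<and> y < y') at_bot" by (rule eventually_conj)
      then obtain y where y: "g y' < g y" "y < y'" by (auto simp: eventually_at_bot_linorder)
      have "F y < x'" using Fmono[OF y(2)] y' by simp
      then have "h (F y) \<le> h x'" using T Frange[of y] unfolding nondec_tail_at_def by blast
      then show False using y hg y' by auto
    qed
    then show "x' \<in> {F ((a2-a1)/(s1-s2))..<1}" using x'01 y' le_iff x0_def by auto
  next
    fix x' assume "x' \<in> {F ((a2-a1)/(s1-s2))..<1}"
    then have x': "F x0 \<le> x'" "x' < 1" using x0_def by auto
    have "0 < x'" using Frange[of x0] x' by auto
    then obtain y' where y': "F y' = x'" using Fsurj x' by auto
    have x0y': "x0 \<le> y'" using x'(1) unfolding y'[symmetric] le_iff .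
    have A: "h x \<le> h x'" if xin: "x \<in> {0<..<1}" "x < x'" for x
    proof -
      obtain y where y: "F y = x" using Fsurj xin(1) by blast
      have "y < y'" using y y' xin(2) le_iff not_le by metis
      show ?thesis
      proof (cases "g y < 0")
        case True
        then show ?thesis using neg[of y'] x0y' hg y y' by auto
      next
        case False
        then have "xs \<le> y" using neg xsx0 by auto
        then show ?thesis using up[of y y'] \<open>y < y'\<close> hg y y' by auto
      qed
    qed
    have B: "h x1 \<le> h x2" if xin: "x1 \<in> {0<..<1}" "x2 \<in> {0<..<1}" "x' \<le> x1" "x1 \<le> x2" for x1 x2
    proof -
      obtain y1 where y1: "F y1 = x1" using Fsurj xin(1) by blast
      obtain y2 where y2: "F y2 = x2" using Fsurj xin(2) by blast
      have "y' \<le> y1" "y1 \<le> y2" using le_iff y1 y2 y' xin by auto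
      then show ?thesis using up[of y1 y2] x0y' xsx0 hg y1 y2 by auto
    qed
    show "x' \<in> {x'. nondec_tail_at h x'}"
      unfolding nondec_tail_at_def using A B \<open>0 < x'\<close> x' by auto
  qed
qed



lemma core_eq:
  fixes F h :: "real \<Rightarrow> real" and a1 a2 s :: real
  assumes Fsurj: "\<And>u. u \<in> {0<..<1} \<Longrightarrow> \<exists>y. F y = u"
    and Fmono: "\<And>x y. x < y \<Longrightarrow> F x < F y"
    and Frange: "\<And>y. F y \<in> {0<..<1}"
    and hF: "\<And>y. h (F y) = exp(a1+s*y) - exp(a2+s*y)"
    and s: "s > 0" and a: "a1 > a2"
  shows "\<forall>u\<in>{0<..<1}. 0 < h u" "\<forall>e>0. \<exists>u\<in>{0<..<1}. h u < 0 + e"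
    "\<forall>B. \<exists>u\<in>{0<..<1}. B < h u" "mono_on {0<..<1} h"
proof -
  define c where "c = exp a1 - exp a2"
  have c: "c > 0" using a unfolding c_def by simp
  have hg: "h (F y) = c * exp (s*y)" for y using hF[of y] unfolding c_def by (simp add: exp_add left_diff_distrib)
  have le_iff: "F x \<le> F y \<longleftrightarrow> x \<le> y" for x y
    using Fmono[of x y] Fmono[of y x] by (cases x y rule: linorder_cases) auto
  show "\<forall>u\<in>{0<..<1}. 0 < h u"
  proof
    fix u :: real assume "u \<in> {0<..<1}"
    then obtain y where "F y = u" using Fsurj by blast
    then show "0 < h u" using hg c by auto
  qed
  have lt: "filterlim (\<lambda>y. c * exp (s*y)) at_top at_top" using c s by real_asymp
  have l0: "((\<lambda>y. c * exp (s*y)) \<longlongrightarrow> 0) at_bot" using c s by real_asymp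
  show "\<forall>B. \<exists>u\<in>{0<..<1}. B < h u"
  proof
    fix B :: real
    have "eventually (\<lambda>y. c * exp (s*y) > B) at_top" using lt by (simp add: filterlim_at_top_dense)
    then obtain y where "c * exp (s*y) > B" by (auto simp: eventually_at_top_linorder)
    then show "\<exists>u\<in>{0<..<1}. B < h u" using Frange[of y] hg[of y] by metis
  qed
  show "\<forall>e>0. \<exists>u\<in>{0<..<1}. h u < 0 + e"
  proof (intro allI impI)
    fix e :: real assume "e > 0"
    have "eventually (\<lambda>y. c * exp (s*y) < e) at_bot" using order_tendstoD(2)[OF l0 \<open>e > 0\<close>] .
    then obtain y where "c * exp (s*y) < e" by (auto simp: eventually_at_bot_linorder)
    then show "\<exists>u\<in>{0<..<1}. h u < 0 + e" using Frange[of y] hg[of y] by (intro bexI[of _ "F y"]) auto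
  qed
  show "mono_on {0<..<1} h"
  proof (rule mono_onI)
    fix u v :: real assume "u \<in> {0<..<1}" "v \<in> {0<..<1}" "u \<le> v"
    then obtain x y where xy: "F x = u" "F y = v" using Fsurj by metis
    then have "x \<le> y" using \<open>u \<le> v\<close> le_iff[of x y] by simp
    then have "exp (s*x) \<le> exp (s*y)" using s by simp
    then show "h u \<le> h v" using xy hg[of x] hg[of y] c by (metis mult_left_mono less_imp_le)
  qed
qed

lemma INF_ereal_eq:
  assumes "\<forall>u\<in>A. c \<le> h u" "\<forall>e>0. \<exists>u\<in>A. h u < c + e"
  shows "(INF u\<in>A. ereal (h u)) = ereal c"
proof (rule INF_eqI)
  show "\<And>i. i \<in> A \<Longrightarrow> ereal c \<le> ereal (h i)" using assms(1) by simp
  fix y assume Y: "\<And>i. i \<in> A \<Longrightarrow> y \<le> ereal (h i)"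
  show "y \<le> ereal c"
  proof (cases y)
    case (real r)
    show ?thesis
    proof (rule ccontr)
      assume "\<not> y \<le> ereal c"
      then have "r - c > 0" using real by simp
      then obtain u where "u \<in> A" "h u < c + (r - c)" using assms(2) by blast
      then show False using Y[of u] real by simp
    qed
  next
    case PInf
    obtain u where "u \<in> A" using assms(2) by (metis zero_less_one)
    then show ?thesis using Y[of u] PInf by simp
  qed simp
qed

lemma SUP_ereal_eq:
  assumes "\<forall>u\<in>A. h u \<le> c" "\<forall>e>0. \<exists>u\<in>A. c - e < h u"
  shows "(SUP u\<in>A. ereal (h u)) = ereal c"
proof (rule SUP_eqI)
  show "\<And>i. i \<in> A \<Longrightarrow> ereal (h i) \<le> ereal c" using assms(1) by simp
  fix y assume Y: "\<And>i. i \<in> A \<Longrightarrow> ereal (h i) \<le> y"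
  show "ereal c \<le> y"
  proof (cases y)
    case (real r)
    show ?thesis
    proof (rule ccontr)
      assume "\<not> ereal c \<le> y"
      then have "c - r > 0" using real by simp
      then obtain u where "u \<in> A" "c - (c - r) < h u" using assms(2) by blast
      then show False using Y[of u] real by simp
    qed
  next
    case MInf
    obtain u where "u \<in> A" using assms(2) by (metis zero_less_one)
    then show ?thesis using Y[of u] MInf by simp
  qed simp
qed

lemma SUP_ereal_top:
  assumes "\<forall>B. \<exists>u\<in>A. B < h u"
  shows "(SUP u\<in>A. ereal (h u)) = \<infinity>"
proof -
  have "\<forall>x<top. \<exists>i\<in>A. x < ereal (h i)"
  proof (intro allI impI)
    fix x :: ereal assume "x < top"
    show "\<exists>i\<in>A. x < ereal (h i)"
    proof (cases x)
      case (real r) then show ?thesis using assms by auto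
    next
      case MInf
      obtain u where "u \<in> A" using assms by blast
      then show ?thesis using MInf by auto
    next
      case PInf then show ?thesis using \<open>x < top\<close> by simp
    qed
  qed
  then have "(SUP u\<in>A. ereal (h u)) = top" unfolding SUP_eq_top_iff .
  then show ?thesis by (simp add: top_ereal_def)
qed

lemma INF_ereal_bot:
  assumes "\<forall>B. \<exists>u\<in>A. h u < B"
  shows "(INF u\<in>A. ereal (h u)) = -\<infinity>"
proof -
  have "\<forall>x>bot. \<exists>i\<in>A. ereal (h i) < x"
  proof (intro allI impI)
    fix x :: ereal assume "x > bot"
    show "\<exists>i\<in>A. ereal (h i) < x"
    proof (cases x)
      case (real r) then show ?thesis using assms by auto
    next
      case PInf
      obtain u where "u \<in> A" using assms by blast
      then show ?thesis using PInf by auto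
    next
      case MInf then show ?thesis using \<open>x > bot\<close> by simp
    qed
  qed
  then have "(INF u\<in>A. ereal (h u)) = bot" unfolding INF_eq_bot_iff .
  then show ?thesis by (simp add: bot_ereal_def)
qed



theorem proposition6p1:
  fixes M :: "'a measure" and W :: "'a \<Rightarrow> real" and f :: "real \<Rightarrow> real"
    and \<mu>1 \<mu>2 \<sigma>1 \<sigma>2 :: real
  assumes "prob_space M"
    and dens: "distributed M lborel W (\<lambda>x. ennreal (f x))"
    and fpos: "\<And>x. f x > 0"
    and "integrable M W"
    and "prob_space.expectation M W = 0"
    and "prob_space.variance M W = 1"
    and "\<sigma>1 > 0" and "\<sigma>2 > 0"
    and "\<not> (\<mu>1 = \<mu>2 \<and> \<sigma>1 = \<sigma>2)"
  defines "F \<equiv> cdf (distr M borel W)"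
  defines "h \<equiv> (\<lambda>u. exp (\<mu>1 + \<sigma>1 * quantile F u) - exp (\<mu>2 + \<sigma>2 * quantile F u))"
  defines "ymin \<equiv> (INF u\<in>{0<..<1::real}. ereal (h u))"
  defines "ymax \<equiv> (SUP u\<in>{0<..<1::real}. ereal (h u))"
  defines "cstar \<equiv> F ((\<mu>2 - \<mu>1) / (\<sigma>1 - \<sigma>2))"
  defines "ustar \<equiv> F ((ln (\<sigma>1 / \<sigma>2) + \<mu>1 - \<mu>2) / (\<sigma>2 - \<sigma>1))"
  defines "ystar \<equiv> h ustar"
  shows "(\<sigma>1 = \<sigma>2 \<and> \<mu>1 > \<mu>2 \<longrightarrow>
            ymin = 0 \<and> ymax = \<infinity> \<and> mono_on {0<..<1} h)
       \<and> (\<sigma>1 = \<sigma>2 \<and> \<mu>2 > \<mu>1 \<longrightarrow>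
            ymin = -\<infinity> \<and> ymax = 0 \<and> antimono_on {0<..<1} h)
       \<and> (\<sigma>1 > \<sigma>2 \<longrightarrow>
            ymin = ereal ystar \<and> ystar < 0 \<and> ymax = \<infinity> \<and>
            has_nondec_upper_tail h \<and> nondec_tail_threshold h = cstar)
       \<and> (\<sigma>1 < \<sigma>2 \<longrightarrow>
            ymin = -\<infinity> \<and> ymax = ereal ystar \<and> ystar > 0 \<and>
            has_noninc_upper_tail h \<and> noninc_tail_threshold h = cstar)"
proof -
  note FP = F_props[OF assms(1) dens fpos, folded F_def]
  note FQ = F_quant[OF FP]
  have Fmono: "\<And>x y. x < y \<Longrightarrow> F x < F y" by (rule FP(1))
  have Fsurj: "\<And>u. u \<in> {0<..<1} \<Longrightarrow> \<exists>y. F y = u" by (rule FQ(2))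
  have Frange: "\<And>y. F y \<in> {0<..<1}" by (rule FQ(3))
  have hF: "\<And>y. h (F y) = exp(\<mu>1+\<sigma>1*y) - exp(\<mu>2+\<sigma>2*y)" using FQ(1) unfolding h_def by simp
  have hFn: "\<And>y. (\<lambda>u. - h u) (F y) = exp(\<mu>2+\<sigma>2*y) - exp(\<mu>1+\<sigma>1*y)" using hF by simp
  have C1: "ymin = 0 \<and> ymax = \<infinity> \<and> mono_on {0<..<1} h" if "\<sigma>1 = \<sigma>2" "\<mu>1 > \<mu>2"
  proof -
    have hF': "\<And>y. h (F y) = exp(\<mu>1+\<sigma>1*y) - exp(\<mu>2+\<sigma>1*y)" using hF that by simp
    note K = core_eq[OF Fsurj Fmono Frange hF' \<open>\<sigma>1 > 0\<close> that(2)]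
    have "ymin = ereal 0" unfolding ymin_def using K(1,2) by (intro INF_ereal_eq) auto
    moreover have "ymax = \<infinity>" unfolding ymax_def using K(3) by (rule SUP_ereal_top)
    ultimately show ?thesis using K(4) by (simp add: zero_ereal_def)
  qed
  have C2: "ymin = -\<infinity> \<and> ymax = 0 \<and> antimono_on {0<..<1} h" if "\<sigma>1 = \<sigma>2" "\<mu>2 > \<mu>1"
  proof -
    have hF': "\<And>y. (\<lambda>u. - h u) (F y) = exp(\<mu>2+\<sigma>1*y) - exp(\<mu>1+\<sigma>1*y)" using hFn that by simp
    note K = core_eq[OF Fsurj Fmono Frange hF' \<open>\<sigma>1 > 0\<close> that(2)]
    have "ymax = ereal 0" unfolding ymax_def using K(1,2)
      by (intro SUP_ereal_eq) (auto, metis add.commute add.left_neutral minus_less_iff)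
    moreover have "ymin = -\<infinity>" unfolding ymin_def
      by (rule INF_ereal_bot) (metis K(3) neg_less_iff_less minus_minus)
    moreover have "antimono_on {0<..<1} h" using K(4)
      unfolding monotone_on_def by auto
    ultimately show ?thesis by (simp add: zero_ereal_def)
  qed
  have C3: "ymin = ereal ystar \<and> ystar < 0 \<and> ymax = \<infinity> \<and>
            has_nondec_upper_tail h \<and> nondec_tail_threshold h = cstar" if "\<sigma>1 > \<sigma>2"
  proof -
    note K = core3[OF Fmono Fsurj Frange hF \<open>\<sigma>2 > 0\<close> that, folded ustar_def cstar_def ystar_def]
    have "ymin = ereal ystar" unfolding ymin_def using K(1,2)
      by (intro INF_ereal_eq) (auto simp: ystar_def intro!: bexI[of _ ustar])
    moreover have "ymax = \<infinity>" unfolding ymax_def using K(4) by (rule SUP_ereal_top)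
    moreover have "has_nondec_upper_tail h" unfolding has_nondec_upper_tail_def
      using K(5,6) by auto
    moreover have "nondec_tail_threshold h = cstar" unfolding nondec_tail_threshold_def
      using K(5) K(6) by (simp add: cInf_atLeastLessThan)
    ultimately show ?thesis using K(3) by simp
  qed
  have C4: "ymin = -\<infinity> \<and> ymax = ereal ystar \<and> ystar > 0 \<and>
            has_noninc_upper_tail h \<and> noninc_tail_threshold h = cstar" if "\<sigma>1 < \<sigma>2"
  proof -
    have e1: "(ln (\<sigma>2/\<sigma>1)+\<mu>2-\<mu>1)/(\<sigma>1-\<sigma>2) = (ln (\<sigma>1 / \<sigma>2) + \<mu>1 - \<mu>2) / (\<sigma>2 - \<sigma>1)"
    proof -
      have "ln (\<sigma>2/\<sigma>1) = - ln (\<sigma>1/\<sigma>2)" using assms(7,8) by (simp add: ln_div)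
      then have "ln (\<sigma>2/\<sigma>1)+\<mu>2-\<mu>1 = -(ln (\<sigma>1/\<sigma>2)+\<mu>1-\<mu>2)" by simp
      moreover have "\<sigma>1 - \<sigma>2 = - (\<sigma>2 - \<sigma>1)" by simp
      ultimately show ?thesis by (metis minus_divide_divide)
    qed
    have e2: "(\<mu>1-\<mu>2)/(\<sigma>2-\<sigma>1) = (\<mu>2 - \<mu>1) / (\<sigma>1 - \<sigma>2)"
      by (metis minus_diff_eq minus_divide_divide)
    note K = core3[OF Fmono Fsurj Frange hFn \<open>\<sigma>1 > 0\<close> that, unfolded e1 e2,
        folded ustar_def cstar_def ystar_def]
    have "ymax = ereal ystar" unfolding ymax_def using K(1,2)
      by (intro SUP_ereal_eq) (auto simp: ystar_def intro!: bexI[of _ ustar])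
    moreover have "ymin = -\<infinity>" unfolding ymin_def
      by (rule INF_ereal_bot) (metis K(4) neg_less_iff_less minus_minus)
    moreover have T: "{x'. noninc_tail_at h x'} = {cstar..<1}"
    proof -
      have "noninc_tail_at h x' \<longleftrightarrow> nondec_tail_at (\<lambda>u. - h u) x'" for x'
        unfolding noninc_tail_at_def nondec_tail_at_def by auto
      then show ?thesis using K(5) by simp
    qed
    moreover have "has_noninc_upper_tail h" unfolding has_noninc_upper_tail_def
      using T K(6) by auto
    moreover have "noninc_tail_threshold h = cstar" unfolding noninc_tail_threshold_def
      using T K(6) by (simp add: cInf_atLeastLessThan)
    ultimately show ?thesis using K(3) by (simp add: ystar_def)
  qed
  show ?thesis using C1 C2 C3 C4 by blast
qed

end
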